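(* Let $n\ge 1$, $L\ge 1$ and $0\le s<n$ be integers, and consider the $(n,L)$-regular tree $T$. Let $\mathcal{D}$ be a finite data set with $|\mathcal{D}|=d\ge 1$, and let $r\in[0,1]$. Suppose a data placement assigns to each worker node $v$ a set $\mathcal{D}(v)\subseteq\mathcal{D}$ with $|\mathcal{D}(v)|\le r d$ for every worker $v$, and suppose the placement is robust to any $s$ stragglers per parent (as defined in the context). Then $$ r \;\ge\; r_{\mathsf{CR}} \;:=\; \frac{1}{\left(\frac{n}{s+1}\right)+\left(\frac{n}{s+1}\right)^2+\cdots+\left(\frac{n}{s+1}\right)^L}. $$
   Context: An $(n,L)$-regular tree consists of a root node (the master, layer $0$) and $L$ layers of worker nodes: each node in layers $0,1,\dots,L-1$ has exactly $n$ children in the next layer, and the nodes of layer $L$ are leaves; thus there are $N=n+n^2+\cdots+n^L$ worker nodes. A straggling pattern is a choice, for every node $u$ in layers $0,\dots,L-1$, of a set of at most $s$ of the children of $u$, declared straggling. Under a straggling pattern, a worker node $v$ is called surviving if neither $v$ nor any of its ancestors in layers $1,\dots,L$ (i.e. the nodes on the path from $v$ to the master, excluding the master) is straggling. The placement $\{\mathcal{D}(v)\}$ is robust to any $s$ stragglers per parent if for every straggling pattern and every data point $x\in\mathcal{D}$ there is a surviving worker $v$ with $x\in\mathcal{D}(v)$ (this is the necessary condition for the master to recover the full gradient $\sum_{x\in\mathcal{D}}\nabla\ell(\theta;x)$, since the contribution of $x$ can only be computed at nodes storing $x$ and propagated to the master along the tree). The number $r$ bounding the fraction of the data set stored at each worker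 is the computation load. *)

theory Defs
  imports Complex_Main
begin

text \<open>Nodes of the (n,L)-regular tree are encoded as lists of child indices
  (each < n) describing the path from the master; the master is [], a node in
  layer k is a list of length k. Child i of node u is u @ [i].\<close>

definition tree_node :: "nat \<Rightarrow> nat \<Rightarrow> nat list \<Rightarrow> bool" where
  "tree_node n L v \<longleftrightarrow> length v \<le> L \<and> (\<forall>i\<in>set v. i < n)"

definition worker :: "nat \<Rightarrow> nat \<Rightarrow> nat list \<Rightarrow> bool" where
  "worker n L v \<longleftrightarrow> tree_node n L v \<and> 1 \<le> length v"

text \<open>A straggling pattern assigns to every node u in layers 0..L-1 a set S u of
  at most s children indices (child u @ [i] straggles iff i \<in> S u).\<close>

definition straggling_pattern :: "nat \<Rightarrow> nat \<Rightarrow> nat \<Rightarrow> (nat list \<Rightarrow> nat set) \<Rightarrow> bool" where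
  "straggling_pattern n L s S \<longleftrightarrow>
     (\<forall>u. tree_node n L u \<and> length u < L \<longrightarrow> S u \<subseteq> {..<n} \<and> card (S u) \<le> s)"

text \<open>v survives iff none of the nodes on the path from v to the master
  (excluding the master), i.e. take (k+1) v for k < length v, is straggling.\<close>

definition surviving :: "(nat list \<Rightarrow> nat set) \<Rightarrow> nat list \<Rightarrow> bool" where
  "surviving S v \<longleftrightarrow> (\<forall>k<length v. v ! k \<notin> S (take k v))"

definition robust_placement ::
  "nat \<Rightarrow> nat \<Rightarrow> nat \<Rightarrow> 'a set \<Rightarrow> (nat list \<Rightarrow> 'a set) \<Rightarrow> bool" where
  "robust_placement n L s Ds D \<longleftrightarrow>
     (\<forall>S. straggling_pattern n L s S \<longrightarrow>
        (\<forall>x\<in>Ds. \<exists>v. worker n L v \<and> surviving S v \<and> x \<in> D v))"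

end

theory Submission
  imports Defs
begin

fun G :: "nat \<Rightarrow> real \<Rightarrow> (nat list \<Rightarrow> real) \<Rightarrow> nat list \<Rightarrow> nat \<Rightarrow> real" where
  "G n q g u 0 = 0"
| "G n q g u (Suc m) = (\<Sum>i<n. q * (g (u@[i]) + G n q g (u@[i]) m))"

lemma G_nonneg: "q \<ge> 0 \<Longrightarrow> (\<And>v. g v \<ge> 0) \<Longrightarrow> G n q g u m \<ge> 0"
  by (induction m arbitrary: u) (auto intro!: sum_nonneg)

lemma G_sum: "finite A \<Longrightarrow> G n q (\<lambda>v. \<Sum>x\<in>A. f x v) u m = (\<Sum>x\<in>A. G n q (f x) u m)"
proof (induction m arbitrary: u)
  case 0 then show ?case by simp
next
  case (Suc m)
  have "G n q (\<lambda>v. \<Sum>x\<in>A. f x v) u (Suc m) =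
     (\<Sum>i<n. \<Sum>x\<in>A. q * (f x (u@[i]) + G n q (f x) (u@[i]) m))"
    using Suc by (simp add: sum_distrib_left sum.distrib distrib_left)
  also have "\<dots> = (\<Sum>x\<in>A. \<Sum>i<n. q * (f x (u@[i]) + G n q (f x) (u@[i]) m))"
    by (rule sum.swap)
  finally show ?case by simp
qed

lemma geo_shift: "(\<Sum>k=1..Suc m. (a::real)^k) = a * (1 + (\<Sum>k=1..m. a^k))"
proof (induction m)
  case 0 then show ?case by simp
next
  case (Suc m)
  have "(\<Sum>k=1..Suc (Suc m). a^k) = (\<Sum>k=1..Suc m. a^k) + a * a^(Suc m)" by simp
  also have "\<dots> = a * (1 + (\<Sum>k=1..m. a^k)) + a * a^(Suc m)" using Suc by simp
  also have "\<dots> = a * (1 + ((\<Sum>k=1..m. a^k) + a^(Suc m)))" by (simp add: algebra_simps)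
  finally show ?case by simp
qed

lemma G_const: "G n q (\<lambda>_. c) u m = c * (\<Sum>k=1..m. (real n * q)^k)"
proof (induction m arbitrary: u)
  case 0 then show ?case by simp
next
  case (Suc m)
  have "G n q (\<lambda>_. c) u (Suc m) = real n * q * (c + c * (\<Sum>k=1..m. (real n * q)^k))"
    using Suc by simp
  also have "\<dots> = c * (\<Sum>k=1..Suc m. (real n * q)^k)"
    unfolding geo_shift by (simp add: algebra_simps)
  finally show ?case .
qed

lemma G_mono:
  assumes "q \<ge> 0" "\<And>v. worker n L v \<Longrightarrow> g v \<le> h v"
  shows "\<forall>a\<in>set u. a < n \<Longrightarrow> length u + m \<le> L \<Longrightarrow> G n q g u m \<le> G n q h u m"
proof (induction m arbitrary: u)
  case 0 then show ?case by simp
next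
  case (Suc m)
  show ?case
  proof (simp only: G.simps, rule sum_mono)
    fix i assume i: "i \<in> {..<n}"
    have w: "worker n L (u@[i])" using Suc.prems i by (auto simp: worker_def tree_node_def)
    have "G n q g (u@[i]) m \<le> G n q h (u@[i]) m"
      using Suc.IH[of "u@[i]"] Suc.prems i by auto
    then show "q * (g (u @ [i]) + G n q g (u @ [i]) m) \<le> q * (h (u @ [i]) + G n q h (u @ [i]) m)"
      using assms(2)[OF w] assms(1) by (intro mult_left_mono) auto
  qed
qed

lemma key:
  assumes q: "q = 1 / real (s+1)"
  shows "\<forall>a\<in>set u. a < n \<Longrightarrow> length u + m = L \<Longrightarrow>
    (\<exists>S. straggling_pattern n L s S \<and>
      (\<forall>v. worker n L v \<longrightarrow> take (length u) v = u \<longrightarrow> length u < length v \<longrightarrow> x \<in> D v \<longrightarrow>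
         \<not>(\<forall>k. length u \<le> k \<and> k < length v \<longrightarrow> v!k \<notin> S (take k v))))
    \<or> G n q (\<lambda>v. of_bool (x \<in> D v)) u m \<ge> 1"
proof (induction m arbitrary: u)
  case 0
  have "straggling_pattern n L s (\<lambda>_. {})" by (simp add: straggling_pattern_def)
  moreover have "\<forall>v. worker n L v \<longrightarrow> \<not> length u < length v"
    using 0 by (auto simp: worker_def tree_node_def)
  ultimately show ?case by blast
next
  case (Suc m)
  define g where "g = (\<lambda>v. of_bool (x \<in> D v) :: real)"
  define Good where "Good = {i. i < n \<and> (x \<in> D (u@[i]) \<or> G n q g (u@[i]) m \<ge> 1)}"
  have qpos: "q > 0" using q by simp
  have fin: "finite Good" unfolding Good_def by auto
  have Gsub: "Good \<subseteq> {..<n}" unfolding Good_def by auto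
  show ?case
  proof (cases "card Good \<ge> s + 1")
    case True
    have t0: "\<And>i. 0 \<le> q * (g (u@[i]) + G n q g (u@[i]) m)"
      using qpos by (intro mult_nonneg_nonneg add_nonneg_nonneg G_nonneg) (auto simp: g_def)
    have "1 = real (s+1) * q" using q by simp
    also have "\<dots> \<le> real (card Good) * q" using True qpos by (intro mult_right_mono) auto
    also have "\<dots> = (\<Sum>i\<in>Good. q)" by simp
    also have "\<dots> \<le> (\<Sum>i\<in>Good. q * (g (u@[i]) + G n q g (u@[i]) m))"
    proof (rule sum_mono)
      fix i assume "i \<in> Good"
      then have "1 \<le> g (u@[i]) + G n q g (u@[i]) m"
        using G_nonneg[of q g n "u@[i]" m] qpos unfolding Good_def g_def by auto
      then show "q \<le> q * (g (u@[i]) + G n q g (u@[i]) m)" using qpos by simp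
    qed
    also have "\<dots> \<le> (\<Sum>i<n. q * (g (u@[i]) + G n q g (u@[i]) m))"
      using Gsub t0 by (intro sum_mono2) auto
    finally show ?thesis unfolding g_def by simp
  next
    case False
    let ?P = "\<lambda>i S. straggling_pattern n L s S \<and>
      (\<forall>v. worker n L v \<longrightarrow> take (length (u@[i])) v = u@[i] \<longrightarrow> length (u@[i]) < length v \<longrightarrow> x \<in> D v \<longrightarrow>
         \<not>(\<forall>k. length (u@[i]) \<le> k \<and> k < length v \<longrightarrow> v!k \<notin> S (take k v)))"
    have ex: "\<forall>i\<in>{..<n}-Good. \<exists>S. ?P i S"
    proof
      fix i assume i: "i \<in> {..<n}-Good"
      then have "\<not> G n q g (u@[i]) m \<ge> 1" unfolding Good_def by auto
      then show "\<exists>S. ?P i S" using Suc.IH[of "u@[i]"] Suc.prems i unfolding g_def by auto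
    qed
    then obtain SS where SS: "\<forall>i\<in>{..<n}-Good. ?P i (SS i)" by metis
    have bad: "\<And>i. i \<in> {..<n}-Good \<Longrightarrow> x \<notin> D (u@[i])" unfolding Good_def by auto
    define S where "S = (\<lambda>w. if w = u then Good else
       if length u < length w \<and> take (length u) w = u \<and> w!(length u) \<in> {..<n}-Good
       then SS (w!(length u)) w else {})"
    have pat: "straggling_pattern n L s S"
      unfolding straggling_pattern_def
    proof (intro allI impI)
      fix w assume w: "tree_node n L w \<and> length w < L"
      show "S w \<subseteq> {..<n} \<and> card (S w) \<le> s"
      proof (cases "w = u")
        case True then show ?thesis using Gsub False by (simp add: S_def)
      next
        case nu: False
        show ?thesis
        proof (cases "length u < length w \<and> take (length u) w = u \<and> w!(length u) \<in> {..<n}-Good")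
          case True
          then have "straggling_pattern n L s (SS (w!(length u)))" using SS by blast
          then show ?thesis using w True nu by (simp add: S_def straggling_pattern_def)
        next
          case f2: False
          have "S w = {}" unfolding S_def by (subst if_not_P[OF nu], subst if_not_P[OF f2]) (rule refl)
          then show ?thesis by simp
        qed
      qed
    qed
    have "\<forall>v. worker n L v \<longrightarrow> take (length u) v = u \<longrightarrow> length u < length v \<longrightarrow> x \<in> D v \<longrightarrow>
         \<not>(\<forall>k. length u \<le> k \<and> k < length v \<longrightarrow> v!k \<notin> S (take k v))"
    proof (intro allI impI notI)
      fix v assume wv: "worker n L v" and tv: "take (length u) v = u" and lv: "length u < length v"
        and xv: "x \<in> D v" and sv: "\<forall>k. length u \<le> k \<and> k < length v \<longrightarrow> v!k \<notin> S (take k v)"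
      define i where "i = v!(length u)"
      have "i < n" using wv lv unfolding i_def worker_def tree_node_def by (auto simp: nth_mem)
      moreover have "i \<notin> Good" using sv[rule_format, of "length u"] lv tv by (simp add: S_def i_def)
      ultimately have ig: "i \<in> {..<n}-Good" by simp
      have tv1: "take (Suc (length u)) v = u@[i]"
        using tv lv by (simp add: take_Suc_conv_app_nth i_def)
      show False
      proof (cases "length v = Suc (length u)")
        case True
        then have "v = u@[i]" using tv1 by (metis take_all order_refl)
        then show False using bad[OF ig] xv by simp
      next
        case False
        then have lv2: "length (u@[i]) < length v" using lv by simp
        have "\<forall>k. length (u@[i]) \<le> k \<and> k < length v \<longrightarrow> v!k \<notin> SS i (take k v)"
        proof (intro allI impI)
          fix k assume k: "length (u@[i]) \<le> k \<and> k < length v"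
          have tk: "take (length u) (take k v) = u" using tv k by (simp add: min_def)
          have nk: "(take k v)!(length u) = i" using k by (simp add: i_def)
          have "take k v \<noteq> u" using k by auto
          then have "S (take k v) = SS i (take k v)"
            using tk nk ig k by (simp add: S_def min_def)
          moreover have "length u \<le> k \<and> k < length v" using k by simp
          then have "v!k \<notin> S (take k v)" using sv by blast
          ultimately show "v!k \<notin> SS i (take k v)" by simp
        qed
        then show False using SS ig wv tv1 lv2 xv by auto
      qed
    qed
    then show ?thesis using pat by blast
  qed
qed

theorem theorem1:
  fixes n L s :: nat and Ds :: "'a set" and D :: "nat list \<Rightarrow> 'a set" and r :: real
  assumes "n \<ge> 1" and "L \<ge> 1" and "s < n"
    and "finite Ds" and "card Ds \<ge> 1"
    and "0 \<le> r" and "r \<le> 1"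
    and "\<And>v. worker n L v \<Longrightarrow> D v \<subseteq> Ds"
    and "\<And>v. worker n L v \<Longrightarrow> real (card (D v)) \<le> r * real (card Ds)"
    and "robust_placement n L s Ds D"
  shows "r \<ge> 1 / (\<Sum>k=1..L. (real n / real (s + 1)) ^ k)"
proof -
  define q where "q = 1 / real (s+1)"
  have qpos: "q > 0" unfolding q_def by simp
  define T where "T = (\<Sum>k=1..L. (real n / real (s + 1)) ^ k)"
  have nq: "real n * q = real n / real (s+1)" unfolding q_def by simp
  have Tpos: "T > 0" unfolding T_def using assms(1,2)
    by (intro sum_pos) auto
  have each: "\<And>x. x \<in> Ds \<Longrightarrow> G n q (\<lambda>v. of_bool (x \<in> D v)) [] L \<ge> 1"
  proof (rule ccontr)
    fix x assume x: "x \<in> Ds" and nG: "\<not> G n q (\<lambda>v. of_bool (x \<in> D v)) [] L \<ge> 1"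
    have H: "(\<exists>S. straggling_pattern n L s S \<and>
      (\<forall>v. worker n L v \<longrightarrow> take (length ([]::nat list)) v = [] \<longrightarrow> length ([]::nat list) < length v \<longrightarrow> x \<in> D v \<longrightarrow>
         \<not>(\<forall>k. length ([]::nat list) \<le> k \<and> k < length v \<longrightarrow> v!k \<notin> S (take k v))))
    \<or> G n q (\<lambda>v. of_bool (x \<in> D v)) [] L \<ge> 1"
      by (rule key[OF q_def]) simp_all
    then obtain S where S: "straggling_pattern n L s S" and
        K: "\<forall>v. worker n L v \<longrightarrow> take (length ([]::nat list)) v = [] \<longrightarrow> length ([]::nat list) < length v \<longrightarrow> x \<in> D v \<longrightarrow>
         \<not>(\<forall>k. length ([]::nat list) \<le> k \<and> k < length v \<longrightarrow> v!k \<notin> S (take k v))"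
      using nG by blast
    obtain v where v: "worker n L v" "surviving S v" "x \<in> D v"
      using assms(10) S x unfolding robust_placement_def by blast
    have a1: "take (length ([]::nat list)) v = []" by simp
    have a2: "length ([]::nat list) < length v" using v(1) unfolding worker_def by auto
    have a3: "\<forall>k. length ([]::nat list) \<le> k \<and> k < length v \<longrightarrow> v!k \<notin> S (take k v)"
      using v(2) unfolding surviving_def by simp
    show False using K v(1) v(3) a1 a2 a3 by blast
  qed
  have "real (card Ds) = (\<Sum>x\<in>Ds. 1)" by simp
  also have "\<dots> \<le> (\<Sum>x\<in>Ds. G n q (\<lambda>v. of_bool (x \<in> D v)) [] L)"
    using each by (intro sum_mono) auto
  also have "\<dots> = G n q (\<lambda>v. \<Sum>x\<in>Ds. of_bool (x \<in> D v)) [] L"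
    by (rule G_sum[OF assms(4), symmetric])
  also have "\<dots> \<le> G n q (\<lambda>v. r * real (card Ds)) [] L"
  proof (rule G_mono[where L=L])
    show "0 \<le> q" using qpos by simp
    fix v assume w: "worker n L v"
    have "(\<Sum>x\<in>Ds. of_bool (x \<in> D v) :: real) = real (card (Ds \<inter> {x. x \<in> D v}))"
      using assms(4) by (simp add: sum_of_bool_eq)
    also have "Ds \<inter> {x. x \<in> D v} = D v" using assms(8)[OF w] by auto
    finally show "(\<Sum>x\<in>Ds. of_bool (x \<in> D v) :: real) \<le> r * real (card Ds)"
      using assms(9)[OF w] by simp
  qed auto
  also have "\<dots> = r * real (card Ds) * T" unfolding G_const T_def nq by simp
  finally have fin: "real (card Ds) \<le> r * real (card Ds) * T" .
  have cpos: "real (card Ds) > 0" using assms(5) by simp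
  have "real (card Ds) * 1 \<le> real (card Ds) * (r*T)" using fin by (simp add: mult_ac)
  then have rT: "1 \<le> r*T" by (simp only: mult_le_cancel_left_pos[OF cpos])
  have "1 / T \<le> r" using Tpos rT by (simp add: divide_le_eq)
  then show ?thesis unfolding T_def .
qed

end
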